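(* Let $p,q\ge 0$ be integers and $\alpha=(\alpha_1,\dots,\alpha_p)$, $\beta=(\beta_1,\dots,\beta_q)$ with all $\alpha_i>0$, $\beta_j>0$. On the Hilbert space $\ell^2$ with orthonormal basis $\{|n\rangle\}_{n\ge 0}$, let $\hat a_f|n\rangle=\sqrt{n}\,f(n)|n-1\rangle$ (and $\hat a_f|0\rangle=0$), where $f(n)=\left(\frac{(\beta_1+n-1)\cdots(\beta_q+n-1)}{(\alpha_1+n-1)\cdots(\alpha_p+n-1)}\right)^{1/2}$. Let ${}_p\rho_q(n)=n!\,\frac{(\beta_1)_n\cdots(\beta_q)_n}{(\alpha_1)_n\cdots(\alpha_p)_n}$, ${}_pF_q(\alpha,\beta;x)=\sum_{n\ge0}\frac{x^n}{{}_p\rho_q(n)}$, and for a nonzero complex $w$ with $|w|^2$ strictly inside the disc of convergence of this series define the hypergeometric coherent state $|w;\alpha,\beta\rangle={}_pF_q(\alpha,\beta;|w|^2)^{-1/2}\sum_{n\ge0}\frac{w^n}{\sqrt{{}_p\rho_q(n)}}|n\rangle$. Let $k\ge1$ be an integer, $z\neq0$ such that $|z|^2$ lies strictly inside the disc of convergence, and for $j=0,\dots,k-1$ put ${}_p^kF_q^j(\alpha,\beta;|z|^2)=\sum_{n\ge0}\frac{|z|^{2(nk+j)}}{{}_p\rho_q(nk+j)}$. Then for each $j=0,1,\dots,k-1$, $$\frac{1}{k}\left(\frac{{}_pF_q(\alpha,\beta;|z|^2)}{{}_p^kF_q^j(\alpha,\beta;|z|^2)}\right)^{1/2}\sum_{l=0}^{k-1}e^{-2\pi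 i jl/k}\,|z e^{2\pi i l/k};\alpha,\beta\rangle={}_p^kF_q^j(\alpha,\beta;|z|^2)^{-1/2}\sum_{n\ge0}\frac{z^{nk+j}}{\sqrt{{}_p\rho_q(nk+j)}}|nk+j\rangle=:|z;\alpha,\beta;k,j\rangle,$$ and the vectors $|z;\alpha,\beta;k,j\rangle$, $j=0,\dots,k-1$, form an orthonormal basis of the eigenspace $\{\psi:\hat a_f^k\psi=z^k\psi\}$ of $\hat a_f^k$ with eigenvalue $z^k$, which is spanned by the coherent states $|ze^{2\pi i l/k};\alpha,\beta\rangle$, $l=0,\dots,k-1$.
   Context: $(a)_n=a(a+1)\cdots(a+n-1)$, $(a)_0=1$, is the Pochhammer symbol. The series ${}_pF_q$ converges for all $x$ if $p\le q$ and for $|x|<1$ if $p=q+1$. *)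

theory Defs
  imports "HOL-Analysis.Analysis"
begin

text \<open>Parameters alpha = (alpha_1,...,alpha_p) and beta = (beta_1,...,beta_q) are real lists;
  p = length alpha, q = length beta. Vectors of l^2 are coefficient sequences nat => complex
  w.r.t. the orthonormal basis |n>.\<close>

definition rho :: "real list \<Rightarrow> real list \<Rightarrow> nat \<Rightarrow> real" where
  "rho \<alpha> \<beta> n = fact n * prod_list (map (\<lambda>b. pochhammer b n) \<beta>)
                          / prod_list (map (\<lambda>a. pochhammer a n) \<alpha>)"

definition hypF :: "real list \<Rightarrow> real list \<Rightarrow> real \<Rightarrow> real" where
  "hypF \<alpha> \<beta> x = (\<Sum>n. x ^ n / rho \<alpha> \<beta> n)"

definition hypFkj :: "real list \<Rightarrow> real list \<Rightarrow> nat \<Rightarrow> nat \<Rightarrow> real \<Rightarrow> real" where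
  "hypFkj \<alpha> \<beta> k j x = (\<Sum>n. x ^ (n * k + j) / rho \<alpha> \<beta> (n * k + j))"

definition ffun :: "real list \<Rightarrow> real list \<Rightarrow> nat \<Rightarrow> real" where
  "ffun \<alpha> \<beta> n = sqrt (prod_list (map (\<lambda>b. b + real n - 1) \<beta>)
                        / prod_list (map (\<lambda>a. a + real n - 1) \<alpha>))"

text \<open>a_f |n> = sqrt n f(n) |n-1>, a_f |0> = 0; on coefficient sequences:
  (a_f psi)(m) = sqrt(m+1) f(m+1) psi(m+1).\<close>
definition af :: "real list \<Rightarrow> real list \<Rightarrow> (nat \<Rightarrow> complex) \<Rightarrow> (nat \<Rightarrow> complex)" where
  "af \<alpha> \<beta> \<psi> = (\<lambda>m. complex_of_real (sqrt (real (Suc m)) * ffun \<alpha> \<beta> (Suc m)) * \<psi> (Suc m))"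

definition l2 :: "(nat \<Rightarrow> complex) set" where
  "l2 = {\<psi>. summable (\<lambda>n. (cmod (\<psi> n))\<^sup>2)}"

definition l2_inner :: "(nat \<Rightarrow> complex) \<Rightarrow> (nat \<Rightarrow> complex) \<Rightarrow> complex" where
  "l2_inner \<phi> \<psi> = (\<Sum>n. cnj (\<phi> n) * \<psi> n)"

text \<open>Eigenspace of a_f^k for eigenvalue mu: vectors in the domain of a_f^k
  (psi, a_f psi, ..., a_f^k psi all in l^2) with a_f^k psi = mu psi.\<close>
definition eigenspace :: "real list \<Rightarrow> real list \<Rightarrow> nat \<Rightarrow> complex \<Rightarrow> (nat \<Rightarrow> complex) set" where
  "eigenspace \<alpha> \<beta> k \<mu> = {\<psi>. (\<forall>i\<le>k. (af \<alpha> \<beta> ^^ i) \<psi> \<in> l2) \<and> (af \<alpha> \<beta> ^^ k) \<psi> = (\<lambda>n. \<mu> * \<psi> n)}"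

definition cspan :: "(nat \<Rightarrow> nat \<Rightarrow> complex) \<Rightarrow> nat \<Rightarrow> (nat \<Rightarrow> complex) set" where
  "cspan v k = {\<psi>. \<exists>c :: nat \<Rightarrow> complex. \<psi> = (\<lambda>n. \<Sum>j<k. c j * v j n)}"

definition cstate :: "real list \<Rightarrow> real list \<Rightarrow> complex \<Rightarrow> nat \<Rightarrow> complex" where
  "cstate \<alpha> \<beta> w n = complex_of_real (1 / sqrt (hypF \<alpha> \<beta> ((cmod w)\<^sup>2)))
                       * w ^ n / complex_of_real (sqrt (rho \<alpha> \<beta> n))"

definition kstate :: "real list \<Rightarrow> real list \<Rightarrow> nat \<Rightarrow> nat \<Rightarrow> complex \<Rightarrow> nat \<Rightarrow> complex" where
  "kstate \<alpha> \<beta> k j z m =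
     (if (\<exists>n. m = n * k + j)
      then complex_of_real (1 / sqrt (hypFkj \<alpha> \<beta> k j ((cmod z)\<^sup>2)))
           * z ^ m / complex_of_real (sqrt (rho \<alpha> \<beta> m))
      else 0)"

end

theory Submission
  imports Defs
begin

lemma prod_list_pos_map: "(\<forall>x\<in>set xs. 0 < f x) \<Longrightarrow> (0::real) < prod_list (map f xs)"
  by (induct xs) auto

lemma prod_list_map_mult: "prod_list (map (\<lambda>x. f x * g x) xs) = prod_list (map f xs) * (prod_list (map g xs)::real)"
  by (induct xs) (auto simp: algebra_simps)

lemma rho_pos:
  assumes "\<forall>a\<in>set \<alpha>. a > 0" "\<forall>b\<in>set \<beta>. b > 0"
  shows "rho \<alpha> \<beta> n > 0"
  unfolding rho_def using assms
  by (intro divide_pos_pos mult_pos_pos prod_list_pos_map) (auto intro: pochhammer_pos)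

lemma rho_Suc:
  "rho \<alpha> \<beta> (Suc n) = rho \<alpha> \<beta> n * real (Suc n) * (prod_list (map (\<lambda>b. b + real n) \<beta>)
        / prod_list (map (\<lambda>a. a + real n) \<alpha>))"
  unfolding rho_def pochhammer_Suc prod_list_map_mult by (simp add: field_simps)

lemma key:
  assumes "\<forall>a\<in>set \<alpha>. a > 0" "\<forall>b\<in>set \<beta>. b > 0"
  shows "sqrt (real (Suc m)) * ffun \<alpha> \<beta> (Suc m) = sqrt (rho \<alpha> \<beta> (Suc m)) / sqrt (rho \<alpha> \<beta> m)"
proof -
  have "real (Suc m) - 1 = real m" by simp
  then have f: "ffun \<alpha> \<beta> (Suc m) = sqrt (prod_list (map (\<lambda>b. b + real m) \<beta>)
        / prod_list (map (\<lambda>a. a + real m) \<alpha>))"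
    unfolding ffun_def by (simp add: add.assoc)
  have p: "rho \<alpha> \<beta> m > 0" using rho_pos assms by blast
  define Q where "Q = prod_list (map (\<lambda>b. b + real m) \<beta>) / prod_list (map (\<lambda>a. a + real m) \<alpha>)"
  have "sqrt (rho \<alpha> \<beta> m * real (Suc m) * Q) = sqrt (rho \<alpha> \<beta> m) * (sqrt (real (Suc m)) * sqrt Q)"
    by (simp add: real_sqrt_mult)
  then show ?thesis unfolding f rho_Suc Q_def[symmetric] using p by (simp add: field_simps)
qed

lemma af_pow:
  assumes "\<forall>a\<in>set \<alpha>. a > 0" "\<forall>b\<in>set \<beta>. b > 0"
  shows "(af \<alpha> \<beta> ^^ i) \<psi> m = complex_of_real (sqrt (rho \<alpha> \<beta> (m + i)) / sqrt (rho \<alpha> \<beta> m)) * \<psi> (m + i)"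
proof (induct i arbitrary: m)
  case 0
  have "rho \<alpha> \<beta> m > 0" using rho_pos assms by blast
  then show ?case by simp
next
  case (Suc i)
  have p: "rho \<alpha> \<beta> (Suc m) > 0" using rho_pos assms by blast
  have "(af \<alpha> \<beta> ^^ Suc i) \<psi> m = af \<alpha> \<beta> ((af \<alpha> \<beta> ^^ i) \<psi>) m" by simp
  also have "\<dots> = complex_of_real (sqrt (rho \<alpha> \<beta> (Suc m)) / sqrt (rho \<alpha> \<beta> m)) *
     (complex_of_real (sqrt (rho \<alpha> \<beta> (Suc m + i)) / sqrt (rho \<alpha> \<beta> (Suc m))) * \<psi> (Suc m + i))"
    unfolding af_def Suc key[OF assms] ..
  also have "\<dots> = complex_of_real (sqrt (rho \<alpha> \<beta> (m + Suc i)) / sqrt (rho \<alpha> \<beta> m)) * \<psi> (m + Suc i)"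
    using p by (simp add: field_simps)
  finally show ?case .
qed

lemma root_sum:
  assumes "k \<ge> 1" "j < k"
  shows "(\<Sum>l<k. exp (2 * of_real pi * \<i> * of_nat l / of_nat k) ^ m
              * exp (- 2 * of_real pi * \<i> * of_nat j * of_nat l / of_nat k))
         = (if m mod k = j then of_nat k else 0)"
proof -
  define u where "u = exp (2 * of_real pi * \<i> * (of_nat m - of_nat j) / of_nat k)"
  have t: "exp (2 * of_real pi * \<i> * of_nat l / of_nat k) ^ m
              * exp (- 2 * of_real pi * \<i> * of_nat j * of_nat l / of_nat k) = u ^ l" for l
  proof -
    have "exp (2 * of_real pi * \<i> * of_nat l / of_nat k) ^ m = exp (of_nat m * (2 * of_real pi * \<i> * of_nat l / of_nat k))"
      by (rule exp_of_nat_mult[symmetric])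
    moreover have "u ^ l = exp (of_nat l * (2 * of_real pi * \<i> * (of_nat m - of_nat j) / of_nat k))"
      unfolding u_def by (rule exp_of_nat_mult[symmetric])
    moreover have "of_nat m * (2 * of_real pi * \<i> * of_nat l / of_nat k) + (- 2 * of_real pi * \<i> * of_nat j * of_nat l / of_nat k)
       = (of_nat l * (2 * of_real pi * \<i> * (of_nat m - of_nat j) / of_nat k) :: complex)"
      using assms by (simp add: field_simps)
    ultimately show ?thesis by (simp add: exp_add[symmetric])
  qed
  have kdvd: "m mod k = j \<longleftrightarrow> (\<exists>n::int. (real m - real j) / real k = real_of_int n)"
  proof
    assume "m mod k = j"
    then have "m = (m div k) * k + j" by (metis div_mult_mod_eq)
    then have "real m = real (m div k) * real k + real j" by (metis of_nat_add of_nat_mult)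
    then have "(real m - real j) / real k = real_of_int (int (m div k))" using assms by (simp add: field_simps)
    then show "\<exists>n::int. (real m - real j) / real k = real_of_int n" by blast
  next
    assume "\<exists>n::int. (real m - real j) / real k = real_of_int n"
    then obtain n::int where "(real m - real j) / real k = real_of_int n" by blast
    then have "real m - real j = real_of_int n * real k" using assms by (simp add: field_simps)
    then have "real_of_int (int m) = real_of_int (n * int k + int j)" by simp
    then have "int m = n * int k + int j" by (simp only: of_int_eq_iff)
    then have "int m mod int k = int j" using assms by simp
    then show "m mod k = j" by (metis of_nat_eq_iff zmod_int)
  qed
  have re: "Re (2 * of_real pi * \<i> * (of_nat m - of_nat j) / of_nat k) = 0"
    by (simp add: Re_divide)
  have im: "Im (2 * of_real pi * \<i> * (of_nat m - of_nat j) / of_nat k) = 2 * pi * ((real m - real j) / real k)"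
    by (simp add: Im_divide power2_eq_square)
  have "(\<exists>n::int. 2 * pi * ((real m - real j) / real k) = of_int (2 * n) * pi)
      \<longleftrightarrow> (\<exists>n::int. (real m - real j) / real k = real_of_int n)"
  proof -
    have "2 * pi * a = of_int (2 * n) * pi \<longleftrightarrow> a = real_of_int n" for a and n :: int
    proof -
      have "2 * pi * a = of_int (2 * n) * pi \<longleftrightarrow> (2 * pi) * a = (2 * pi) * real_of_int n" by (simp add: algebra_simps)
      also have "\<dots> \<longleftrightarrow> a = real_of_int n" using pi_gt_zero by simp
      finally show ?thesis .
    qed
    then show ?thesis by presburger
  qed
  then have u1: "u = 1 \<longleftrightarrow> m mod k = j"
    unfolding u_def exp_eq_1 kdvd re im by simp
  have uk: "u ^ k = 1"
  proof -
    have "u ^ k = exp (of_nat k * (2 * of_real pi * \<i> * (of_nat m - of_nat j) / of_nat k))"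
      unfolding u_def exp_of_nat_mult ..
    also have "\<dots> = exp (2 * of_real pi * \<i> * (of_int (int m - int j)))"
    proof -
      have "of_nat k * (2 * of_real pi * \<i> * (of_nat m - of_nat j) / of_nat k) = 2 * of_real pi * \<i> * (of_nat m - of_nat j :: complex)"
        using assms by (simp add: field_simps)
      moreover have "(of_int (int m - int j) :: complex) = of_nat m - of_nat j" by simp
      ultimately show ?thesis by simp
    qed
    also have "\<dots> = 1"
    proof -
      have "Re (2 * of_real pi * \<i> * (of_int (int m - int j))) = 0" by simp
      moreover have "Im (2 * of_real pi * \<i> * (of_int (int m - int j))) = of_int (2 * (int m - int j)) * pi" by simp
      ultimately show ?thesis unfolding exp_eq_1 by blast
    qed
    finally show ?thesis .
  qed
  show ?thesis unfolding t sum_gp_strict uk using u1 by simp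
qed

lemma mod_iff:
  assumes "j < (k::nat)"
  shows "(\<exists>n. m = n * k + j) \<longleftrightarrow> m mod k = j"
proof
  assume "\<exists>n. m = n * k + j" then show "m mod k = j" using assms by auto
next
  assume "m mod k = j" then show "\<exists>n. m = n * k + j" by (metis div_mult_mod_eq)
qed

locale hs =
  fixes \<alpha> \<beta> :: "real list" and k :: nat and z :: complex
  assumes apos: "\<forall>a\<in>set \<alpha>. a > 0" and bpos: "\<forall>b\<in>set \<beta>. b > 0" and k1: "k \<ge> 1" and z0: "z \<noteq> 0"
    and conv: "ereal ((cmod z)\<^sup>2) < conv_radius (\<lambda>n. 1 / rho \<alpha> \<beta> n)"
begin

abbreviation "x \<equiv> (cmod z)\<^sup>2"
abbreviation "s n \<equiv> sqrt (rho \<alpha> \<beta> n)"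
abbreviation "F \<equiv> hypF \<alpha> \<beta> x"
abbreviation "Fj j \<equiv> hypFkj \<alpha> \<beta> k j x"

lemma rp: "rho \<alpha> \<beta> n > 0" using rho_pos apos bpos by blast
lemma sp: "s n > 0" using rp by simp
lemma xp: "x > 0" using z0 by simp

lemma summ: "summable (\<lambda>n. x ^ n / rho \<alpha> \<beta> n)"
proof -
  have "ereal (norm x) < conv_radius (\<lambda>n. 1 / rho \<alpha> \<beta> n)" using conv by simp
  from abs_summable_in_conv_radius[OF this] show ?thesis
    using rp by (simp add: abs_mult abs_of_pos)
qed

lemma Fpos: "F > 0"
  unfolding hypF_def using summ xp rp by (intro suminf_pos) auto

definition h :: "nat \<Rightarrow> nat \<Rightarrow> real" where
  "h j m = (if m mod k = j then x ^ m / rho \<alpha> \<beta> m else 0)"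

lemma h_summ: "summable (h j)"
  by (rule summable_comparison_test[OF _ summ]) (use xp rp in \<open>auto simp: h_def abs_of_pos intro!: exI[of _ 0] less_imp_le\<close>)

lemma gmono: "strict_mono (\<lambda>n. n * k + j)"
  using k1 by (auto simp: strict_mono_def)

lemma h_zero: "j < k \<Longrightarrow> m \<notin> range (\<lambda>n. n * k + j) \<Longrightarrow> h j m = 0"
  using mod_iff[of j k m] by (auto simp: h_def)

lemma h_g: "j < k \<Longrightarrow> h j (n * k + j) = x ^ (n * k + j) / rho \<alpha> \<beta> (n * k + j)"
  by (simp add: h_def)

lemma Fj_summ: "j < k \<Longrightarrow> summable (\<lambda>n. x ^ (n * k + j) / rho \<alpha> \<beta> (n * k + j))"
  using summable_mono_reindex[OF gmono[of j], where f = "h j"] h_zero h_g h_summ by simp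

lemma Fj_eq: "j < k \<Longrightarrow> Fj j = suminf (h j)"
proof -
  assume j: "j < k"
  have "(\<lambda>n. h j (n * k + j)) sums suminf (h j)"
    using sums_mono_reindex[OF gmono[of j], where f = "h j"] h_zero[OF j] h_summ summable_sums by blast
  then have "(\<lambda>n. x ^ (n * k + j) / rho \<alpha> \<beta> (n * k + j)) sums suminf (h j)" using h_g[OF j] by simp
  then show ?thesis unfolding hypFkj_def by (simp add: sums_iff)
qed

lemma Fj_pos: "j < k \<Longrightarrow> Fj j > 0"
  unfolding hypFkj_def using Fj_summ xp rp by (intro suminf_pos) auto

lemma kstate_eq: "j < k \<Longrightarrow> kstate \<alpha> \<beta> k j z m =
   (if m mod k = j then complex_of_real (1 / sqrt (Fj j)) * z ^ m / complex_of_real (s m) else 0)"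
  unfolding kstate_def using mod_iff[of j k m] by simp

end

context hs begin

definition Eset :: "(nat \<Rightarrow> complex) set" where
  "Eset = {\<psi>. \<exists>d. \<psi> = (\<lambda>m. d (m mod k) * z ^ m / complex_of_real (s m))}"

lemma kpos: "k > 0" using k1 by simp

lemma E_sub_eig: "(\<lambda>m. d (m mod k) * z ^ m / complex_of_real (s m)) \<in> eigenspace \<alpha> \<beta> k (z ^ k)"
proof -
  define \<psi> where "\<psi> = (\<lambda>m. d (m mod k) * z ^ m / complex_of_real (s m))"
  have pw: "(af \<alpha> \<beta> ^^ i) \<psi> m = d ((m + i) mod k) * z ^ (m + i) / complex_of_real (s m)" for i m
    using sp[of "m+i"] sp[of m] unfolding af_pow[OF apos bpos] \<psi>_def
    by (simp add: field_simps)
  define D where "D = (\<Sum>r<k. (cmod (d r))\<^sup>2)"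
  have Dle: "(cmod (d (n mod k)))\<^sup>2 \<le> D" for n
    unfolding D_def using kpos by (intro member_le_sum) auto
  have l2: "(af \<alpha> \<beta> ^^ i) \<psi> \<in> l2" for i
  proof -
    have eqn: "(cmod ((af \<alpha> \<beta> ^^ i) \<psi> n))\<^sup>2 = (cmod (d ((n + i) mod k)))\<^sup>2 * x ^ i * (x ^ n / rho \<alpha> \<beta> n)" for n
    proof -
      have "(cmod ((af \<alpha> \<beta> ^^ i) \<psi> n))\<^sup>2 = (cmod (d ((n + i) mod k)))\<^sup>2 * ((cmod z)\<^sup>2) ^ (n + i) / (s n)\<^sup>2"
        unfolding pw using sp[of n]
        by (simp add: norm_mult norm_divide norm_power power_mult_distrib power_divide abs_of_pos mult.commute flip: power_mult)
      also have "\<dots> = (cmod (d ((n + i) mod k)))\<^sup>2 * x ^ i * (x ^ n / rho \<alpha> \<beta> n)"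
        using rp[of n] by (simp add: power_add field_simps)
      finally show ?thesis .
    qed
    have "summable (\<lambda>n. D * x ^ i * (x ^ n / rho \<alpha> \<beta> n))"
      using summ by (intro summable_mult)
    then have "summable (\<lambda>n. (cmod ((af \<alpha> \<beta> ^^ i) \<psi> n))\<^sup>2)"
    proof (rule summable_comparison_test[rotated], intro exI allI impI)
      fix n
      have "0 \<le> x ^ i * (x ^ n / rho \<alpha> \<beta> n)" using rp[of n] by simp
      then have "(cmod (d ((n + i) mod k)))\<^sup>2 * (x ^ i * (x ^ n / rho \<alpha> \<beta> n)) \<le> D * (x ^ i * (x ^ n / rho \<alpha> \<beta> n))"
        by (intro mult_right_mono Dle)
      then show "norm ((cmod ((af \<alpha> \<beta> ^^ i) \<psi> n))\<^sup>2) \<le> D * x ^ i * (x ^ n / rho \<alpha> \<beta> n)"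
        unfolding eqn using rp[of n] by (simp add: mult.assoc abs_of_pos)
    qed
    then show ?thesis unfolding l2_def by simp
  qed
  have ev: "(af \<alpha> \<beta> ^^ k) \<psi> = (\<lambda>n. z ^ k * \<psi> n)"
    by (rule ext, subst pw) (simp add: \<psi>_def power_add)
  show ?thesis using l2 ev unfolding eigenspace_def \<psi>_def by auto
qed

lemma eig_sub_E:
  assumes "\<psi> \<in> eigenspace \<alpha> \<beta> k (z ^ k)"
  shows "\<psi> \<in> Eset"
proof -
  have ev: "(af \<alpha> \<beta> ^^ k) \<psi> = (\<lambda>n. z ^ k * \<psi> n)" using assms unfolding eigenspace_def by auto
  have eq: "complex_of_real (s (m + k) / s m) * \<psi> (m + k) = z ^ k * \<psi> m" for m
    using fun_cong[OF ev, of m] unfolding af_pow[OF apos bpos] .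
  define d where "d r = \<psi> r * complex_of_real (s r) / z ^ r" for r
  have "\<psi> m = d (m mod k) * z ^ m / complex_of_real (s m)" for m
  proof (induct m rule: less_induct)
    case (less m)
    show ?case
    proof (cases "m < k")
      case True
      then show ?thesis using sp[of m] z0 by (simp add: d_def)
    next
      case False
      then obtain m' where m: "m = m' + k" by (metis add.commute le_add_diff_inverse not_less)
      have IH: "\<psi> m' = d (m' mod k) * z ^ m' / complex_of_real (s m')" using less m kpos by simp
      have "\<psi> (m' + k) = complex_of_real (s m' / s (m' + k)) * (z ^ k * \<psi> m')"
        using eq[of m'] sp[of m'] sp[of "m'+k"] by (simp add: field_simps)
      also have "\<dots> = d (m' mod k) * z ^ (m' + k) / complex_of_real (s (m' + k))"
        unfolding IH using sp[of m'] sp[of "m'+k"] by (simp add: field_simps power_add)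
      finally show ?thesis using m by simp
    qed
  qed
  then show ?thesis unfolding Eset_def by blast
qed

lemma eig_E: "eigenspace \<alpha> \<beta> k (z ^ k) = Eset"
  using eig_sub_E E_sub_eig unfolding Eset_def by blast

end

context hs begin

abbreviation "K j \<equiv> complex_of_real (1 / sqrt (Fj j))"
abbreviation "e l \<equiv> exp (2 * of_real pi * \<i> * of_nat l / of_nat k)"

lemma kstate_comb: "(\<Sum>j<k. c j * kstate \<alpha> \<beta> k j z n) = c (n mod k) * K (n mod k) * z ^ n / complex_of_real (s n)"
proof -
  have "(\<Sum>j<k. c j * kstate \<alpha> \<beta> k j z n) = (\<Sum>j<k. if n mod k = j then c j * (K j * z ^ n / complex_of_real (s n)) else 0)"
    by (rule sum.cong) (auto simp: kstate_eq)
  also have "\<dots> = c (n mod k) * K (n mod k) * z ^ n / complex_of_real (s n)"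
    using kpos by simp
  finally show ?thesis .
qed

lemma cspan_k: "cspan (\<lambda>j. kstate \<alpha> \<beta> k j z) k = Eset"
proof
  show "cspan (\<lambda>j. kstate \<alpha> \<beta> k j z) k \<subseteq> Eset"
  proof
    fix \<psi> assume "\<psi> \<in> cspan (\<lambda>j. kstate \<alpha> \<beta> k j z) k"
    then obtain c where c: "\<psi> = (\<lambda>n. \<Sum>j<k. c j * kstate \<alpha> \<beta> k j z n)" unfolding cspan_def by blast
    have "\<psi> = (\<lambda>n. (\<lambda>r. c r * K r) (n mod k) * z ^ n / complex_of_real (s n))"
      unfolding c kstate_comb by simp
    then show "\<psi> \<in> Eset" unfolding Eset_def by - (rule CollectI, rule exI[of _ "\<lambda>r. c r * K r"], assumption)
  qed
next
  show "Eset \<subseteq> cspan (\<lambda>j. kstate \<alpha> \<beta> k j z) k"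
  proof
    fix \<psi> assume "\<psi> \<in> Eset"
    then obtain d where d: "\<psi> = (\<lambda>m. d (m mod k) * z ^ m / complex_of_real (s m))" unfolding Eset_def by blast
    have "\<psi> = (\<lambda>n. \<Sum>j<k. (d j / K j) * kstate \<alpha> \<beta> k j z n)"
    proof
      fix n
      have "n mod k < k" using kpos by simp
      then have "Fj (n mod k) > 0" by (rule Fj_pos)
      then show "\<psi> n = (\<Sum>j<k. (d j / K j) * kstate \<alpha> \<beta> k j z n)"
        unfolding kstate_comb d by simp
    qed
    then show "\<psi> \<in> cspan (\<lambda>j. kstate \<alpha> \<beta> k j z) k" unfolding cspan_def
      by - (rule CollectI, rule exI[of _ "\<lambda>j. d j / K j"], assumption)
  qed
qed

lemma e_norm: "cmod (e l) = 1"
  by (simp add: Re_divide)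

lemma e_k: "e l ^ k = 1"
proof -
  have "e l ^ k = exp (of_nat k * (2 * of_real pi * \<i> * of_nat l / of_nat k))"
    by (rule exp_of_nat_mult[symmetric])
  also have "\<dots> = exp (2 * of_real pi * \<i> * of_int (int l))" using kpos by (simp add: field_simps)
  also have "\<dots> = 1"
  proof -
    have "Re (2 * of_real pi * \<i> * (of_int (int l))) = 0" by simp
    moreover have "Im (2 * of_real pi * \<i> * (of_int (int l))) = of_int (2 * (int l)) * pi" by simp
    ultimately show ?thesis unfolding exp_eq_1 by blast
  qed
  finally show ?thesis .
qed

lemma e_mod: "e l ^ n = e l ^ (n mod k)"
proof -
  have "e l ^ n = e l ^ (k * (n div k) + n mod k)" by simp
  also have "\<dots> = (e l ^ k) ^ (n div k) * e l ^ (n mod k)" by (simp only: power_add power_mult)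
  finally show ?thesis using e_k by simp
qed

lemma cstate_e: "cstate \<alpha> \<beta> (z * e l) n = complex_of_real (1 / sqrt F) * e l ^ n * z ^ n / complex_of_real (s n)"
  unfolding cstate_def by (simp add: norm_mult e_norm power_mult_distrib del: norm_exp_eq_Re)

lemma cspan_c: "cspan (\<lambda>l. cstate \<alpha> \<beta> (z * e l)) k = Eset"
proof
  show "cspan (\<lambda>l. cstate \<alpha> \<beta> (z * e l)) k \<subseteq> Eset"
  proof
    fix \<psi> assume "\<psi> \<in> cspan (\<lambda>l. cstate \<alpha> \<beta> (z * e l)) k"
    then obtain c where c: "\<psi> = (\<lambda>n. \<Sum>l<k. c l * cstate \<alpha> \<beta> (z * e l) n)" unfolding cspan_def by blast
    have "\<psi> = (\<lambda>n. ((\<Sum>l<k. c l * e l ^ (n mod k)) * complex_of_real (1 / sqrt F)) * z ^ n / complex_of_real (s n))"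
    proof
      fix n
      have "\<psi> n = (\<Sum>l<k. (c l * e l ^ (n mod k)) * (complex_of_real (1 / sqrt F) * z ^ n / complex_of_real (s n)))"
        unfolding c cstate_e by (rule sum.cong) (auto simp: e_mod[of _ n])
      also have "\<dots> = (\<Sum>l<k. c l * e l ^ (n mod k)) * (complex_of_real (1 / sqrt F) * z ^ n / complex_of_real (s n))"
        by (rule sum_distrib_right[symmetric])
      also have "\<dots> = ((\<Sum>l<k. c l * e l ^ (n mod k)) * complex_of_real (1 / sqrt F)) * z ^ n / complex_of_real (s n)"
        by (simp only: mult.assoc times_divide_eq_right)
      finally show "\<psi> n = \<dots>" .
    qed
    then show "\<psi> \<in> Eset" unfolding Eset_def
      by - (rule CollectI, rule exI[of _ "\<lambda>r. (\<Sum>l<k. c l * e l ^ r) * complex_of_real (1 / sqrt F)"], assumption)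
  qed
next
  show "Eset \<subseteq> cspan (\<lambda>l. cstate \<alpha> \<beta> (z * e l)) k"
  proof
    fix \<psi> assume "\<psi> \<in> Eset"
    then obtain d where d: "\<psi> = (\<lambda>m. d (m mod k) * z ^ m / complex_of_real (s m))" unfolding Eset_def by blast
    define c where "c l = complex_of_real (sqrt F) / of_nat k *
       (\<Sum>j<k. d j * exp (- 2 * of_real pi * \<i> * of_nat j * of_nat l / of_nat k))" for l
    have "\<psi> = (\<lambda>n. \<Sum>l<k. c l * cstate \<alpha> \<beta> (z * e l) n)"
    proof
      fix n
      have "(\<Sum>l<k. c l * e l ^ n) = complex_of_real (sqrt F) / of_nat k *
          (\<Sum>j<k. d j * (\<Sum>l<k. e l ^ n * exp (- 2 * of_real pi * \<i> * of_nat j * of_nat l / of_nat k)))"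
      proof -
        have "(\<Sum>l<k. c l * e l ^ n) = complex_of_real (sqrt F) / of_nat k *
          (\<Sum>l<k. \<Sum>j<k. d j * (e l ^ n * exp (- 2 * of_real pi * \<i> * of_nat j * of_nat l / of_nat k)))"
          unfolding c_def by (simp add: sum_distrib_left sum_distrib_right mult_ac)
        also have "\<dots> = complex_of_real (sqrt F) / of_nat k *
          (\<Sum>j<k. \<Sum>l<k. d j * (e l ^ n * exp (- 2 * of_real pi * \<i> * of_nat j * of_nat l / of_nat k)))"
          by (subst sum.swap) (rule refl)
        also have "\<dots> = complex_of_real (sqrt F) / of_nat k *
          (\<Sum>j<k. d j * (\<Sum>l<k. e l ^ n * exp (- 2 * of_real pi * \<i> * of_nat j * of_nat l / of_nat k)))"
          by (simp only: sum_distrib_left)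
        finally show ?thesis .
      qed
      also have "\<dots> = complex_of_real (sqrt F) / of_nat k * (\<Sum>j<k. d j * (if n mod k = j then of_nat k else 0))"
        using root_sum[OF k1] by simp
      also have "\<dots> = complex_of_real (sqrt F) * d (n mod k)"
        using kpos by (simp add: if_distrib cong: if_cong)
      finally have S: "(\<Sum>l<k. c l * e l ^ n) = complex_of_real (sqrt F) * d (n mod k)" .
      have "(\<Sum>l<k. c l * cstate \<alpha> \<beta> (z * e l) n) = (\<Sum>l<k. c l * e l ^ n) * (complex_of_real (1 / sqrt F) * z ^ n / complex_of_real (s n))"
      proof -
        have "(\<Sum>l<k. c l * cstate \<alpha> \<beta> (z * e l) n) = (\<Sum>l<k. (c l * e l ^ n) * (complex_of_real (1 / sqrt F) * z ^ n / complex_of_real (s n)))"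
          unfolding cstate_e by (rule sum.cong) auto
        also have "\<dots> = (\<Sum>l<k. c l * e l ^ n) * (complex_of_real (1 / sqrt F) * z ^ n / complex_of_real (s n))"
          by (rule sum_distrib_right[symmetric])
        finally show ?thesis .
      qed
      also have "\<dots> = d (n mod k) * z ^ n / complex_of_real (s n)"
        unfolding S using Fpos by simp
      finally show "\<psi> n = (\<Sum>l<k. c l * cstate \<alpha> \<beta> (z * e l) n)" unfolding d by simp
    qed
    then show "\<psi> \<in> cspan (\<lambda>l. cstate \<alpha> \<beta> (z * e l)) k" unfolding cspan_def
      by - (rule CollectI, rule exI[of _ c], assumption)
  qed
qed

end

context hs begin

lemma part1:
  assumes j: "j < k"
  shows "(1 / of_nat k) * complex_of_real (sqrt (F / Fj j))
              * (\<Sum>l<k. exp (- 2 * of_real pi * \<i> * of_nat j * of_nat l / of_nat k)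
                         * cstate \<alpha> \<beta> (z * e l) m) = kstate \<alpha> \<beta> k j z m"
proof -
  define B where "B = complex_of_real (1 / sqrt F) * z ^ m / complex_of_real (s m)"
  have "(\<Sum>l<k. exp (- 2 * of_real pi * \<i> * of_nat j * of_nat l / of_nat k) * cstate \<alpha> \<beta> (z * e l) m)
      = (\<Sum>l<k. (e l ^ m * exp (- 2 * of_real pi * \<i> * of_nat j * of_nat l / of_nat k)) * B)"
    unfolding cstate_e B_def by (rule sum.cong) (auto simp: mult_ac)
  also have "\<dots> = (\<Sum>l<k. e l ^ m * exp (- 2 * of_real pi * \<i> * of_nat j * of_nat l / of_nat k)) * B"
    by (rule sum_distrib_right[symmetric])
  also have "\<dots> = (if m mod k = j then of_nat k else 0) * B"
    unfolding root_sum[OF k1 j] ..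
  finally have S: "(\<Sum>l<k. exp (- 2 * of_real pi * \<i> * of_nat j * of_nat l / of_nat k) * cstate \<alpha> \<beta> (z * e l) m)
      = (if m mod k = j then of_nat k else 0) * B" .
  have fj: "Fj j > 0" using Fj_pos[OF j] .
  have sq: "complex_of_real (sqrt (F / Fj j)) * complex_of_real (1 / sqrt F) = complex_of_real (1 / sqrt (Fj j))"
  proof -
    have r: "sqrt (F / Fj j) * (1 / sqrt F) = 1 / sqrt (Fj j)" using Fpos fj by (simp add: real_sqrt_divide)
    show ?thesis unfolding of_real_mult[symmetric] r ..
  qed
  show ?thesis
  proof (cases "m mod k = j")
    case True
    have "(1 / of_nat k) * complex_of_real (sqrt (F / Fj j)) * (of_nat k * B)
        = (complex_of_real (sqrt (F / Fj j)) * complex_of_real (1 / sqrt F)) * z ^ m / complex_of_real (s m)"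
      unfolding B_def using kpos by (simp add: field_simps)
    then show ?thesis unfolding S sq kstate_eq[OF j] using True by simp
  next
    case False
    then show ?thesis unfolding S kstate_eq[OF j] by simp
  qed
qed

lemma part2:
  assumes j: "j < k"
  shows "kstate \<alpha> \<beta> k j z \<in> eigenspace \<alpha> \<beta> k (z ^ k)"
proof -
  have "kstate \<alpha> \<beta> k j z = (\<lambda>m. (\<lambda>r. if r = j then K j else 0) (m mod k) * z ^ m / complex_of_real (s m))"
    by (rule ext) (simp add: kstate_eq[OF j])
  then show ?thesis using E_sub_eig by simp
qed

lemma part3:
  assumes i: "i < k" and j: "j < k"
  shows "l2_inner (kstate \<alpha> \<beta> k i z) (kstate \<alpha> \<beta> k j z) = (if i = j then 1 else 0)"
proof (cases "i = j")
  case False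
  have "cnj (kstate \<alpha> \<beta> k i z n) * kstate \<alpha> \<beta> k j z n = 0" for n
    unfolding kstate_eq[OF i] kstate_eq[OF j] using False by auto
  then have "(\<lambda>n. cnj (kstate \<alpha> \<beta> k i z n) * kstate \<alpha> \<beta> k j z n) = (\<lambda>n. 0)" by (rule ext)
  then show ?thesis using False unfolding l2_inner_def by simp
next
  case True
  have fj: "Fj j > 0" using Fj_pos[OF j] .
  have t: "cnj (kstate \<alpha> \<beta> k j z n) * kstate \<alpha> \<beta> k j z n = complex_of_real (h j n / Fj j)" for n
  proof (cases "n mod k = j")
    case True
    have c: "cnj (z ^ n) * z ^ n = complex_of_real (x ^ n)"
    proof -
      have "complex_of_real (x ^ n) = (complex_of_real x) ^ n" by (rule of_real_power)
      also have "complex_of_real x = z * cnj z" by (rule complex_norm_square)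
      finally have "complex_of_real (x ^ n) = (z * cnj z) ^ n" .
      then show ?thesis by (simp add: power_mult_distrib mult.commute)
    qed
    have "cnj (kstate \<alpha> \<beta> k j z n) * kstate \<alpha> \<beta> k j z n
       = (complex_of_real (1 / sqrt (Fj j)))\<^sup>2 * (cnj (z ^ n) * z ^ n) / (complex_of_real (s n))\<^sup>2"
      unfolding kstate_eq[OF j] using True by (simp add: power2_eq_square field_simps)
    also have "\<dots> = complex_of_real (h j n / Fj j)"
      unfolding c h_def using True fj rp[of n]
      by (simp flip: of_real_power of_real_mult of_real_divide add: power_divide)
    finally show ?thesis .
  next
    case False
    then show ?thesis unfolding kstate_eq[OF j] h_def by simp
  qed
  have "(\<Sum>n. complex_of_real (h j n / Fj j)) = complex_of_real (\<Sum>n. h j n / Fj j)"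
    by (rule suminf_of_real[symmetric]) (intro summable_divide h_summ)
  also have "(\<Sum>n. h j n / Fj j) = 1"
    unfolding suminf_divide[OF h_summ] Fj_eq[OF j, symmetric] using fj by simp
  finally have "(\<Sum>n. complex_of_real (h j n / Fj j)) = 1" by simp
  moreover have "(\<lambda>n. cnj (kstate \<alpha> \<beta> k j z n) * kstate \<alpha> \<beta> k j z n) = (\<lambda>n. complex_of_real (h j n / Fj j))"
    by (rule ext) (rule t)
  ultimately show ?thesis using True unfolding l2_inner_def by simp
qed

end

theorem proposition2:
  fixes \<alpha> \<beta> :: "real list" and k :: nat and z :: complex
  assumes "\<forall>a\<in>set \<alpha>. a > 0" and "\<forall>b\<in>set \<beta>. b > 0" and "k \<ge> 1" and "z \<noteq> 0"
    and "ereal ((cmod z)\<^sup>2) < conv_radius (\<lambda>n. 1 / rho \<alpha> \<beta> n)"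
  shows "(\<forall>j<k. (\<lambda>m. (1 / of_nat k)
              * complex_of_real (sqrt (hypF \<alpha> \<beta> ((cmod z)\<^sup>2) / hypFkj \<alpha> \<beta> k j ((cmod z)\<^sup>2)))
              * (\<Sum>l<k. exp (- 2 * of_real pi * \<i> * of_nat j * of_nat l / of_nat k)
                         * cstate \<alpha> \<beta> (z * exp (2 * of_real pi * \<i> * of_nat l / of_nat k)) m))
            = kstate \<alpha> \<beta> k j z)
       \<and> (\<forall>j<k. kstate \<alpha> \<beta> k j z \<in> eigenspace \<alpha> \<beta> k (z ^ k))
       \<and> (\<forall>i<k. \<forall>j<k. l2_inner (kstate \<alpha> \<beta> k i z) (kstate \<alpha> \<beta> k j z) = (if i = j then 1 else 0))
       \<and> eigenspace \<alpha> \<beta> k (z ^ k) = cspan (\<lambda>j. kstate \<alpha> \<beta> k j z) k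
       \<and> eigenspace \<alpha> \<beta> k (z ^ k) = cspan (\<lambda>l. cstate \<alpha> \<beta> (z * exp (2 * of_real pi * \<i> * of_nat l / of_nat k))) k"
proof -
  interpret hs \<alpha> \<beta> k z using assms by unfold_locales
  show ?thesis
    using part1 part2 part3 eig_E cspan_k cspan_c by auto
qed

end
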